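(* Let $q$ be an odd prime power, $m\geq 2$ and $n=\frac{q^m-1}{2}$. Then the negacyclic BCH code $\mathcal{C}_{(q,n,2,0)}$, whose generator polynomial is $\mathbb{M}_{\beta}(x)$, has parameters $[n,n-m,d]$, where $d=3$ if $q=3$ and $d=2$ if $q\neq 3$, and it is distance-optimal with respect to the sphere-packing bound.
   Context: Let $\ell$ be the order of $q$ modulo $2n$, $\alpha$ a primitive element of $\mathrm{GF}(q^\ell)$, $\beta=\alpha^{(q^\ell-1)/(2n)}$ (a primitive $2n$-th root of unity), and $\mathbb{M}_{\beta}(x)$ the minimal polynomial of $\beta$ over $\mathrm{GF}(q)$. $\mathcal{C}_{(q,n,2,0)}$ is the negacyclic code of length $n$ over $\mathrm{GF}(q)$, i.e. the ideal of $\mathrm{GF}(q)[x]/(x^n+1)$ generated by $\mathbb{M}_{\beta}(x)$. An $[n,k,d]$ code over $\mathrm{GF}(q)$ is distance-optimal with respect to the sphere-packing bound if the sphere-packing bound shows that no $[n,k,d+1]$ linear code over $\mathrm{GF}(q)$ exists. *)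

theory Defs
  imports "HOL-Number_Theory.Pocklington" "HOL-Computational_Algebra.Polynomial"
begin

definition field_embedding :: "('a::field \<Rightarrow> 'b::field) \<Rightarrow> bool" where
  "field_embedding f \<longleftrightarrow> inj f \<and> f 0 = 0 \<and> f 1 = 1 \<and>
     (\<forall>x y. f (x + y) = f x + f y) \<and> (\<forall>x y. f (x * y) = f x * f y)"

definition primitive_element :: "'b::field \<Rightarrow> bool" where
  "primitive_element a \<longleftrightarrow> range (\<lambda>i::nat. a ^ i) = UNIV - {0}"

definition is_min_poly :: "('a::field \<Rightarrow> 'b::field) \<Rightarrow> 'b \<Rightarrow> 'a poly \<Rightarrow> bool" where
  "is_min_poly f b g \<longleftrightarrow> lead_coeff g = 1 \<and> poly (map_poly f g) b = 0 \<and>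
     (\<forall>h. h \<noteq> 0 \<and> poly (map_poly f h) b = 0 \<longrightarrow> degree g \<le> degree h)"

definition min_poly :: "('a::field \<Rightarrow> 'b::field) \<Rightarrow> 'b \<Rightarrow> 'a poly" where
  "min_poly f b = (THE g. is_min_poly f b g)"

text \<open>Words of length n are lists of length n; a codeword c_0 + ... + c_{n-1} x^{n-1}
  of GF(q)[x]/(x^n+1) is identified with its coefficient vector.\<close>
definition negacyclic_code :: "nat \<Rightarrow> 'a::field poly \<Rightarrow> 'a list set" where
  "negacyclic_code n g =
     {map (coeff ((g * h) mod (monom 1 n + 1))) [0..<n] | h. True}"

definition hamming_dist :: "'a list \<Rightarrow> 'a list \<Rightarrow> nat" where
  "hamming_dist x y = card {i. i < length x \<and> x ! i \<noteq> y ! i}"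

definition min_dist :: "'a list set \<Rightarrow> nat" where
  "min_dist C = Min {hamming_dist x y | x y. x \<in> C \<and> y \<in> C \<and> x \<noteq> y}"

definition linear_code :: "nat \<Rightarrow> 'a::field list set \<Rightarrow> bool" where
  "linear_code n C \<longleftrightarrow> C \<subseteq> {xs. length xs = n} \<and> replicate n 0 \<in> C \<and>
     (\<forall>x\<in>C. \<forall>y\<in>C. map2 (+) x y \<in> C) \<and> (\<forall>c. \<forall>x\<in>C. map ((*) c) x \<in> C)"

definition has_params :: "'a::{finite,field} list set \<Rightarrow> nat \<Rightarrow> nat \<Rightarrow> nat \<Rightarrow> bool" where
  "has_params C n k d \<longleftrightarrow> linear_code n C \<and> card C = card (UNIV :: 'a set) ^ k \<and> min_dist C = d"

definition distance_optimal :: "'a::{finite,field} itself \<Rightarrow> nat \<Rightarrow> nat \<Rightarrow> nat \<Rightarrow> bool" where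
  "distance_optimal _ n k d \<longleftrightarrow> \<not> (\<exists>C :: 'a list set. has_params C n k (d + 1))"

end

theory Submission
  imports Defs
begin

lemma fe_basic:
  fixes emb :: "'a::field \<Rightarrow> 'b::field"
  assumes "field_embedding emb"
  shows fe_0: "emb 0 = 0" and fe_1: "emb 1 = 1"
    and fe_add: "emb (x + y) = emb x + emb y"
    and fe_mult: "emb (x * y) = emb x * emb y"
    and fe_inj: "emb x = emb y \<longleftrightarrow> x = y"
  using assms unfolding field_embedding_def inj_def by blast+

lemma fe_uminus:
  fixes emb :: "'a::field \<Rightarrow> 'b::field"
  assumes "field_embedding emb"
  shows "emb (- x) = - emb x"
proof -
  have "emb x + emb (- x) = 0" using fe_add[OF assms, of x "-x"] fe_0[OF assms] by simp
  then show ?thesis by (simp add: eq_neg_iff_add_eq_0 add.commute)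
qed

lemma fe_diff:
  fixes emb :: "'a::field \<Rightarrow> 'b::field"
  assumes "field_embedding emb"
  shows "emb (x - y) = emb x - emb y"
  using fe_add[OF assms, of x "-y"] fe_uminus[OF assms, of y] by simp

lemma fe_eq0:
  fixes emb :: "'a::field \<Rightarrow> 'b::field"
  assumes "field_embedding emb"
  shows "emb x = 0 \<longleftrightarrow> x = 0"
  using fe_inj[OF assms, of x 0] fe_0[OF assms] by simp

lemma fe_divide:
  fixes emb :: "'a::field \<Rightarrow> 'b::field"
  assumes "field_embedding emb" "y \<noteq> 0"
  shows "emb (x / y) = emb x / emb y"
proof -
  have "emb (x / y) * emb y = emb x" using fe_mult[OF assms(1), of "x/y" y] assms(2) by simp
  moreover have "emb y \<noteq> 0" using fe_eq0[OF assms(1)] assms(2) by simp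
  ultimately show ?thesis by (simp add: eq_divide_eq)
qed

lemma map_poly_add_fe:
  fixes emb :: "'a::field \<Rightarrow> 'b::field"
  assumes "field_embedding emb"
  shows "map_poly emb (p + q) = map_poly emb p + map_poly emb q"
  by (intro poly_eqI) (simp add: coeff_map_poly fe_0[OF assms] fe_add[OF assms])

lemma map_poly_diff_fe:
  fixes emb :: "'a::field \<Rightarrow> 'b::field"
  assumes "field_embedding emb"
  shows "map_poly emb (p - q) = map_poly emb p - map_poly emb q"
  by (intro poly_eqI) (simp add: coeff_map_poly fe_0[OF assms] fe_diff[OF assms])

lemma ev_mult:
  fixes emb :: "'a::field \<Rightarrow> 'b::field"
  assumes "field_embedding emb"
  shows "poly (map_poly emb (p * q)) x = poly (map_poly emb p) x * poly (map_poly emb q) x"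
proof (induction p)
  case 0
  then show ?case by simp
next
  case (pCons a p)
  have "pCons a p * q = smult a q + pCons 0 (p * q)" by (simp add: mult_pCons_left)
  then have "poly (map_poly emb (pCons a p * q)) x
      = emb a * poly (map_poly emb q) x + x * poly (map_poly emb (p * q)) x"
    by (simp add: map_poly_add_fe[OF assms] map_poly_smult fe_0[OF assms] fe_mult[OF assms]
        map_poly_pCons)
  also have "\<dots> = poly (map_poly emb (pCons a p)) x * poly (map_poly emb q) x"
    using pCons by (simp add: map_poly_pCons fe_0[OF assms] algebra_simps)
  finally show ?case .
qed

lemma ev_smult:
  fixes emb :: "'a::field \<Rightarrow> 'b::field"
  assumes "field_embedding emb"
  shows "poly (map_poly emb (smult c p)) x = emb c * poly (map_poly emb p) x"
  by (simp add: map_poly_smult fe_0[OF assms] fe_mult[OF assms])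

lemma ev_dvd:
  fixes emb :: "'a::field \<Rightarrow> 'b::field"
  assumes "field_embedding emb" "g dvd p" "poly (map_poly emb g) x = 0"
  shows "poly (map_poly emb p) x = 0"
  using assms(2,3) ev_mult[OF assms(1)] by (auto elim!: dvdE)

lemma degree_less_if:
  fixes p :: "'a::zero poly"
  assumes "degree p \<le> d" "coeff p d = 0" "p \<noteq> 0"
  shows "degree p < d"
  using assms by (metis le_neq_implies_less leading_coeff_0_iff)

lemma min_poly_props:
  fixes emb :: "'a::field \<Rightarrow> 'b::field"
  assumes fe: "field_embedding emb" and ex: "h0 \<noteq> 0" "poly (map_poly emb h0) b = 0"
  shows "is_min_poly emb b (min_poly emb b)"
    and "\<And>p. min_poly emb b dvd p \<longleftrightarrow> poly (map_poly emb p) b = 0"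
proof -
  define P where "P = (\<lambda>d. \<exists>h. h \<noteq> 0 \<and> poly (map_poly emb h) b = 0 \<and> degree h = d)"
  have "P (degree h0)" using ex unfolding P_def by blast
  then have "P (LEAST d. P d)" by (rule LeastI)
  then obtain h where h: "h \<noteq> 0" "poly (map_poly emb h) b = 0" "degree h = (LEAST d. P d)"
    unfolding P_def by blast
  have hmin: "degree h \<le> degree h'" if "h' \<noteq> 0" "poly (map_poly emb h') b = 0" for h'
  proof -
    have "P (degree h')" using that unfolding P_def by blast
    then show ?thesis using h(3) Least_le[of P "degree h'"] by simp
  qed
  define g where "g = smult (inverse (lead_coeff h)) h"
  have lc: "lead_coeff h \<noteq> 0" using h(1) by simp
  have gdeg: "degree g = degree h" unfolding g_def using lc by simp
  have gmin: "is_min_poly emb b g"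
    unfolding is_min_poly_def
  proof (intro conjI allI impI)
    show "lead_coeff g = 1" unfolding g_def using lc by (simp add: gdeg[unfolded g_def])
    show "poly (map_poly emb g) b = 0" unfolding g_def using h(2) ev_smult[OF fe] by simp
    fix h' assume "h' \<noteq> 0 \<and> poly (map_poly emb h') b = 0"
    then show "degree g \<le> degree h'" using hmin gdeg by simp
  qed
  have uniq: "g' = g" if "is_min_poly emb b g'" for g'
  proof (rule ccontr)
    assume ne: "g' \<noteq> g"
    have g'0: "g' \<noteq> 0" using that unfolding is_min_poly_def by auto
    have g0: "g \<noteq> 0" using gmin unfolding is_min_poly_def by auto
    have d1: "degree g \<le> degree g'" using gmin that g'0 unfolding is_min_poly_def by blast
    have d2: "degree g' \<le> degree g" using gmin that g0 unfolding is_min_poly_def by blast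
    have deq: "degree g' = degree g" using d1 d2 by simp
    have r: "poly (map_poly emb (g' - g)) b = 0"
      using that gmin unfolding is_min_poly_def by (simp add: map_poly_diff_fe[OF fe])
    have "degree (g' - g) \<le> degree g" using deq by (simp add: degree_diff_le)
    moreover have "coeff (g' - g) (degree g) = 0"
      using that gmin deq unfolding is_min_poly_def by simp
    moreover have "g' - g \<noteq> 0" using ne by simp
    ultimately have "degree (g' - g) < degree g" by (rule degree_less_if)
    moreover have "degree g \<le> degree (g' - g)"
      using gmin r \<open>g' - g \<noteq> 0\<close> unfolding is_min_poly_def by blast
    ultimately show False by simp
  qed
  have mp: "min_poly emb b = g"
    unfolding min_poly_def using gmin uniq by (rule the_equality)
  show "is_min_poly emb b (min_poly emb b)" using mp gmin by simp
  fix p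
  show "min_poly emb b dvd p \<longleftrightarrow> poly (map_poly emb p) b = 0"
  proof
    assume "min_poly emb b dvd p"
    then show "poly (map_poly emb p) b = 0"
      using ev_dvd[OF fe] gmin mp unfolding is_min_poly_def by auto
  next
    assume pz: "poly (map_poly emb p) b = 0"
    have g0: "g \<noteq> 0" using gmin unfolding is_min_poly_def by auto
    have "p = g * (p div g) + p mod g" by simp
    then have "poly (map_poly emb (p mod g)) b = 0"
      using pz gmin unfolding is_min_poly_def
      by (metis (no_types, lifting) add_0 ev_mult[OF fe] map_poly_diff_fe[OF fe] mult_zero_left
          add_diff_cancel_left' poly_diff)
    show "min_poly emb b dvd p"
    proof (rule ccontr)
      assume "\<not> min_poly emb b dvd p"
      then have "p mod g \<noteq> 0" using mp by (simp add: mod_eq_0_iff_dvd)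
      then have "degree (p mod g) < degree g" using g0 by (simp add: degree_mod_less')
      moreover have "degree g \<le> degree (p mod g)"
        using gmin \<open>poly (map_poly emb (p mod g)) b = 0\<close> \<open>p mod g \<noteq> 0\<close>
        unfolding is_min_poly_def by blast
      ultimately show False by simp
    qed
  qed
qed

lemma pow_mod_period:
  fixes a :: "'b::field"
  assumes "a ^ k = 1"
  shows "a ^ i = a ^ (i mod k)"
proof -
  have "a ^ i = a ^ (k * (i div k) + i mod k)" by simp
  also have "\<dots> = a ^ (k * (i div k)) * a ^ (i mod k)" by (simp only: power_add)
  also have "\<dots> = (a ^ k) ^ (i div k) * a ^ (i mod k)" by (simp only: power_mult)
  finally show ?thesis using assms by simp
qed

lemma prim_facts:
  fixes \<alpha> :: "'b::{finite,field}"
  assumes prim: "primitive_element \<alpha>" and cardb: "card (UNIV::'b set) = N + 1"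
  shows prim_nz: "\<alpha> \<noteq> 0" and prim_N: "\<alpha> ^ N = 1"
    and prim_min: "\<And>k. 0 < k \<Longrightarrow> k < N \<Longrightarrow> \<alpha> ^ k \<noteq> 1"
    and prim_inj: "\<And>i j. i < N \<Longrightarrow> j < N \<Longrightarrow> \<alpha> ^ i = \<alpha> ^ j \<Longrightarrow> i = j"
    and prim_surj: "\<And>b. b \<noteq> 0 \<Longrightarrow> \<exists>k<N. b = \<alpha> ^ k"
    and prim_Npos: "N > 0"
proof -
  have rng: "range (\<lambda>i::nat. \<alpha> ^ i) = UNIV - {0}" using prim unfolding primitive_element_def .
  have cU: "card (UNIV - {0::'b}) = N" using cardb by (simp add: card_Diff_singleton)
  show nz: "\<alpha> \<noteq> 0" using rng by (metis Diff_iff insertI1 power_one_right rangeI)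
  have Npos: "N > 0"
  proof -
    have "{0::'b, 1} \<subseteq> UNIV" by simp
    then have "card {0::'b,1} \<le> card (UNIV::'b set)" by (intro card_mono) auto
    then show ?thesis using cardb by simp
  qed
  show "N > 0" by (rule Npos)
  have bound: "N \<le> k" if "0 < k" "\<alpha> ^ k = 1" for k
  proof -
    have "UNIV - {0} \<subseteq> (\<lambda>i. \<alpha> ^ i) ` {..<k}"
    proof
      fix b :: 'b assume "b \<in> UNIV - {0}"
      then have "b \<in> range (\<lambda>i. \<alpha> ^ i)" using rng by simp
      then obtain i where "b = \<alpha> ^ i" by (auto elim: rangeE)
      then have "b = \<alpha> ^ (i mod k)" using pow_mod_period[OF that(2)] by simp
      then show "b \<in> (\<lambda>i. \<alpha> ^ i) ` {..<k}" using that(1) by auto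
    qed
    then have "card (UNIV - {0::'b}) \<le> card ((\<lambda>i. \<alpha> ^ i) ` {..<k})" by (intro card_mono) auto
    also have "\<dots> \<le> k" using card_image_le[of "{..<k}" "(\<lambda>i. \<alpha> ^ i)"] by simp
    finally show ?thesis using cU by simp
  qed
  have cancel: "\<alpha> ^ (j - i) = 1" if "i < j" "\<alpha> ^ i = \<alpha> ^ j" for i j
  proof -
    have "\<alpha> ^ j = \<alpha> ^ i * \<alpha> ^ (j - i)" using that(1) by (simp flip: power_add)
    then show ?thesis using that(2) nz by simp
  qed
  have "\<not> inj_on (\<lambda>i. \<alpha> ^ i) {..N}"
  proof
    assume "inj_on (\<lambda>i. \<alpha> ^ i) {..N}"
    then have "card ((\<lambda>i. \<alpha> ^ i) ` {..N}) = N + 1" by (simp add: card_image)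
    moreover have "(\<lambda>i. \<alpha> ^ i) ` {..N} \<subseteq> UNIV - {0}" using nz by auto
    then have "card ((\<lambda>i. \<alpha> ^ i) ` {..N}) \<le> N" using cU by (metis card_mono finite)
    ultimately show False by simp
  qed
  then obtain i j where ij: "i \<le> N" "j \<le> N" "i \<noteq> j" "\<alpha> ^ i = \<alpha> ^ j"
    unfolding inj_on_def by auto
  have "\<exists>s. 0 < s \<and> s \<le> N \<and> \<alpha> ^ s = 1"
  proof (cases "i < j")
    case True then show ?thesis using cancel[OF True ij(4)] ij by (intro exI[of _ "j - i"]) auto
  next
    case False then have "j < i" using ij by simp
    then show ?thesis using cancel[of j i] ij by (intro exI[of _ "i - j"]) auto
  qed
  then obtain s where s: "0 < s" "s \<le> N" "\<alpha> ^ s = 1" by blast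
  then have "s = N" using bound[OF s(1) s(3)] s(2) by simp
  then show aN: "\<alpha> ^ N = 1" using s by simp
  show mn: "\<alpha> ^ k \<noteq> 1" if "0 < k" "k < N" for k using bound[of k] that by auto
  show "i = j" if "i < N" "j < N" "\<alpha> ^ i = \<alpha> ^ j" for i j
  proof (rule ccontr)
    assume "i \<noteq> j"
    then consider "i < j" | "j < i" by linarith
    then show False
    proof cases
      case 1 then show False using cancel[OF 1 that(3)] mn[of "j - i"] that by simp
    next
      case 2 then show False using cancel[OF 2 that(3)[symmetric]] mn[of "i - j"] that by simp
    qed
  qed
  show "\<exists>k<N. b = \<alpha> ^ k" if "b \<noteq> 0" for b
  proof -
    have "b \<in> range (\<lambda>i. \<alpha> ^ i)" using rng that by simp
    then obtain i where "b = \<alpha> ^ i" by (auto elim: rangeE)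
    then have "b = \<alpha> ^ (i mod N)" using pow_mod_period[OF aN] by simp
    then show ?thesis using Npos by (intro exI[of _ "i mod N"]) simp
  qed
qed

definition Ev :: "('a::field \<Rightarrow> 'b::field) \<Rightarrow> 'b \<Rightarrow> nat \<Rightarrow> 'a list \<Rightarrow> 'b" where
  "Ev emb a n c = (\<Sum>i<n. emb (c ! i) * a ^ i)"

lemma Ev_map: "Ev emb a n (map f [0..<n]) = (\<Sum>i<n. emb (f i) * a ^ i)"
  unfolding Ev_def by (intro sum.cong) auto

lemma sum_supp:
  fixes emb :: "'a::field \<Rightarrow> 'b::field"
  assumes fe: "field_embedding emb" and "S \<subseteq> {..<n}" and "\<And>i. i < n \<Longrightarrow> i \<notin> S \<Longrightarrow> f i = 0"
  shows "(\<Sum>i<n. emb (f i) * a ^ i) = (\<Sum>i\<in>S. emb (f i) * a ^ i)"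
  using assms by (intro sum.mono_neutral_right) (auto simp: fe_0[OF fe])

lemma Ev_add:
  fixes emb :: "'a::field \<Rightarrow> 'b::field"
  assumes fe: "field_embedding emb" and "length x = n" "length y = n"
  shows "Ev emb a n (map2 (+) x y) = Ev emb a n x + Ev emb a n y"
  unfolding Ev_def using assms
  by (simp add: sum.distrib[symmetric] fe_add[OF fe] distrib_right)

lemma Ev_diff:
  fixes emb :: "'a::field \<Rightarrow> 'b::field"
  assumes fe: "field_embedding emb" and "length x = n" "length y = n"
  shows "Ev emb a n (map2 (-) x y) = Ev emb a n x - Ev emb a n y"
  unfolding Ev_def using assms
  by (simp add: sum_subtractf[symmetric] fe_diff[OF fe] left_diff_distrib)

lemma Ev_smult:
  fixes emb :: "'a::field \<Rightarrow> 'b::field"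
  assumes fe: "field_embedding emb" and "length x = n"
  shows "Ev emb a n (map ((*) c) x) = emb c * Ev emb a n x"
  unfolding Ev_def using assms
  by (simp add: sum_distrib_left fe_mult[OF fe] mult.assoc)

lemma poly_Ev:
  fixes emb :: "'a::field \<Rightarrow> 'b::field"
  assumes fe: "field_embedding emb" and "degree r < n"
  shows "poly (map_poly emb r) a = Ev emb a n (map (coeff r) [0..<n])"
proof -
  have "poly (map_poly emb r) a = (\<Sum>i\<le>degree (map_poly emb r). coeff (map_poly emb r) i * a ^ i)"
    by (rule poly_altdef)
  also have "\<dots> = (\<Sum>i<n. coeff (map_poly emb r) i * a ^ i)"
  proof (intro sum.mono_neutral_left)
    have "degree (map_poly emb r) = degree r"
      by (rule degree_map_poly) (simp add: fe_eq0[OF fe])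
    then show "{..degree (map_poly emb r)} \<subseteq> {..<n}" using assms(2) by auto
    show "\<forall>i\<in>{..<n} - {..degree (map_poly emb r)}. coeff (map_poly emb r) i * a ^ i = 0"
      by (auto simp: coeff_eq_0)
  qed auto
  also have "\<dots> = Ev emb a n (map (coeff r) [0..<n])"
    unfolding Ev_map by (simp add: coeff_map_poly fe_0[OF fe])
  finally show ?thesis .
qed

lemma Poly_list:
  fixes c :: "'a::zero list"
  assumes "length c = n" "n > 0"
  shows "map (coeff (Poly c)) [0..<n] = c" and "degree (Poly c) < n"
proof -
  show "map (coeff (Poly c)) [0..<n] = c"
    using assms by (intro nth_equalityI) (auto simp: nth_default_def)
  have "degree (Poly c) \<le> n - 1"
    using assms by (intro degree_le) (auto simp: nth_default_def)
  then show "degree (Poly c) < n" using assms by simp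
qed

lemma negacyclic_char:
  fixes emb :: "'a::field \<Rightarrow> 'b::field"
  assumes fe: "field_embedding emb" and n0: "n > 0"
    and root: "poly (map_poly emb (monom 1 n + 1)) a = 0"
  shows "negacyclic_code n (min_poly emb a) = {c. length c = n \<and> Ev emb a n c = 0}"
proof -
  define X :: "'a poly" where "X = monom 1 n + 1"
  define g where "g = min_poly emb a"
  have degX: "degree X = n" unfolding X_def using n0
    by (subst degree_add_eq_left) (auto simp: degree_monom_eq)
  have X0: "X \<noteq> 0" using degX n0 by auto
  note mp = min_poly_props[OF fe X0 root[folded X_def]]
  have gX: "g dvd X" unfolding g_def using mp(2) root X_def by simp
  show ?thesis
  proof (intro equalityI subsetI)
    fix c assume "c \<in> negacyclic_code n (min_poly emb a)"
    then obtain h where c: "c = map (coeff ((g * h) mod X)) [0..<n]"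
      unfolding negacyclic_code_def g_def X_def by blast
    define r where "r = (g * h) mod X"
    have "g dvd r" unfolding r_def using gX by (simp add: dvd_mod)
    then have "poly (map_poly emb r) a = 0" using mp(2) g_def by simp
    moreover have "degree r < n"
    proof (cases "r = 0")
      case True then show ?thesis using n0 by simp
    next
      case False then show ?thesis unfolding r_def using degX X0 by (metis degree_mod_less' r_def)
    qed
    ultimately show "c \<in> {c. length c = n \<and> Ev emb a n c = 0}"
      using poly_Ev[OF fe] c r_def by simp
  next
    fix c assume "c \<in> {c. length c = n \<and> Ev emb a n c = 0}"
    then have c: "length c = n" "Ev emb a n c = 0" by auto
    note P = Poly_list[OF c(1) n0]
    have "poly (map_poly emb (Poly c)) a = 0" using poly_Ev[OF fe P(2)] P(1) c(2) by simp
    then have "g dvd Poly c" using mp(2) g_def by simp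
    then obtain h where h: "Poly c = g * h" by (elim dvdE)
    have "(g * h) mod X = Poly c" using h P(2) degX by (metis mod_poly_less)
    then have "c = map (coeff ((g * h) mod X)) [0..<n]" using P(1) by simp
    then show "c \<in> negacyclic_code n (min_poly emb a)"
      unfolding negacyclic_code_def g_def X_def by blast
  qed
qed

lemma ham_le: "hamming_dist x y \<le> length x"
proof -
  have "{i. i < length x \<and> x ! i \<noteq> y ! i} \<subseteq> {..<length x}" by auto
  then show ?thesis unfolding hamming_dist_def by (metis card_lessThan card_mono finite_lessThan)
qed

lemma ham_sym: "length x = length y \<Longrightarrow> hamming_dist x y = hamming_dist y x"
  unfolding hamming_dist_def by (simp add: eq_commute)

lemma ham_self: "hamming_dist x x = 0"
  unfolding hamming_dist_def by simp

lemma ham_tri: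
  assumes "length x = length z"
  shows "hamming_dist x y \<le> hamming_dist x z + hamming_dist z y"
proof -
  have "{k. k < length x \<and> x ! k \<noteq> y ! k} \<subseteq>
        {k. k < length x \<and> x ! k \<noteq> z ! k} \<union> {k. k < length z \<and> z ! k \<noteq> y ! k}"
    using assms by auto
  then have "card {k. k < length x \<and> x ! k \<noteq> y ! k} \<le>
        card ({k. k < length x \<and> x ! k \<noteq> z ! k} \<union> {k. k < length z \<and> z ! k \<noteq> y ! k})"
    by (intro card_mono) auto
  also have "\<dots> \<le> card {k. k < length x \<and> x ! k \<noteq> z ! k} + card {k. k < length z \<and> z ! k \<noteq> y ! k}"
    by (rule card_Un_le)
  finally show ?thesis unfolding hamming_dist_def .
qed

lemma ham_upd: "hamming_dist c (c[i := x]) \<le> 1"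
proof -
  have "{k. k < length c \<and> c ! k \<noteq> c[i := x] ! k} \<subseteq> {i}"
  proof
    fix k assume "k \<in> {k. k < length c \<and> c ! k \<noteq> c[i := x] ! k}"
    then have ne: "c ! k \<noteq> c[i := x] ! k" by simp
    show "k \<in> {i}"
    proof (rule ccontr)
      assume "k \<notin> {i}"
      then have "c[i := x] ! k = c ! k" by simp
      then show False using ne by simp
    qed
  qed
  then have "card {k. k < length c \<and> c ! k \<noteq> c[i := x] ! k} \<le> card {i}" by (intro card_mono) auto
  then show ?thesis unfolding hamming_dist_def by simp
qed

lemma ham_take:
  assumes "length x = N + 1" "length y = N + 1"
  shows "hamming_dist x y \<le> hamming_dist (take N x) (take N y) + 1"
proof -
  have "{k. k < length x \<and> x ! k \<noteq> y ! k} \<subseteq>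
        {k. k < length (take N x) \<and> take N x ! k \<noteq> take N y ! k} \<union> {N}"
    using assms by auto
  then have "card {k. k < length x \<and> x ! k \<noteq> y ! k} \<le>
        card ({k. k < length (take N x) \<and> take N x ! k \<noteq> take N y ! k} \<union> {N})"
    by (intro card_mono) auto
  also have "\<dots> \<le> card {k. k < length (take N x) \<and> take N x ! k \<noteq> take N y ! k} + card {N}"
    by (rule card_Un_le)
  finally show ?thesis unfolding hamming_dist_def by simp
qed

lemma card_lists_N: "card {xs :: 'a::finite list. length xs = N} = card (UNIV::'a set) ^ N"
  using card_lists_length_eq[of "UNIV :: 'a set" N] by simp

lemma finite_lists_N: "finite {xs :: 'a::finite list. length xs = N}"
  using finite_lists_length_eq[of "UNIV :: 'a set" N] by simp

lemma sphere:
  fixes D :: "'a::{finite,field} list set"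
  assumes DL: "D \<subseteq> {xs. length xs = N}"
    and dist: "\<forall>x\<in>D. \<forall>y\<in>D. x \<noteq> y \<longrightarrow> 3 \<le> hamming_dist x y"
  shows "card D * (1 + N * (card (UNIV::'a set) - 1)) \<le> card (UNIV::'a set) ^ N"
proof -
  define T :: "(nat \<times> 'a) option set" where "T = insert None (Some ` ({..<N} \<times> (UNIV - {0})))"
  define f :: "'a list \<times> (nat \<times> 'a) option \<Rightarrow> 'a list" where
    "f = (\<lambda>(c, t). case t of None \<Rightarrow> c | Some (i, v) \<Rightarrow> c[i := c ! i + v])"
  have cT: "card T = 1 + N * (card (UNIV::'a set) - 1)"
  proof -
    have "card (Some ` ({..<N} \<times> (UNIV - {0::'a}))) = card ({..<N} \<times> (UNIV - {0::'a}))"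
      by (rule card_image) simp
    also have "\<dots> = N * (card (UNIV::'a set) - 1)" by (simp add: card_cartesian_product card_Diff_singleton)
    finally show ?thesis unfolding T_def by (subst card_insert_disjoint) auto
  qed
  have fin: "finite D" using DL finite_lists_N finite_subset by blast
  have props: "length (f (c, t)) = length c \<and> hamming_dist c (f (c, t)) \<le> 1" for c t
  proof (cases t)
    case None then show ?thesis unfolding f_def by (simp add: ham_self)
  next
    case (Some a)
    then obtain i v where "t = Some (i, v)" by force
    then show ?thesis unfolding f_def using ham_upd[of c i "c ! i + v"] by simp
  qed
  have inj: "inj_on f (D \<times> T)"
  proof (rule inj_onI)
    fix p1 p2 assume p1: "p1 \<in> D \<times> T" and p2: "p2 \<in> D \<times> T" and eq: "f p1 = f p2"
    obtain c1 t1 where e1: "p1 = (c1, t1)" by force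
    obtain c2 t2 where e2: "p2 = (c2, t2)" by force
    have l1: "length c1 = N" and l2: "length c2 = N" using p1 p2 e1 e2 DL by auto
    have "hamming_dist c1 c2 \<le> hamming_dist c1 (f p1) + hamming_dist (f p1) c2"
      using props[of c1 t1] e1 by (intro ham_tri) simp
    also have "hamming_dist (f p1) c2 = hamming_dist c2 (f p1)"
      using ham_sym[of "f p1" c2] props[of c1 t1] e1 l1 l2 by simp
    also have "\<dots> = hamming_dist c2 (f (c2, t2))" using eq e2 by simp
    finally have "hamming_dist c1 c2 \<le> hamming_dist c1 (f (c1, t1)) + hamming_dist c2 (f (c2, t2))"
      using e1 by simp
    moreover have "hamming_dist c1 (f (c1, t1)) \<le> 1" "hamming_dist c2 (f (c2, t2)) \<le> 1"
      using props by blast+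
    ultimately have "hamming_dist c1 c2 \<le> 2" by linarith
    then have c: "c1 = c2"
    proof (rule contrapos_pp)
      assume "c1 \<noteq> c2"
      then have "3 \<le> hamming_dist c1 c2" using dist p1 p2 e1 e2 by auto
      then show "\<not> hamming_dist c1 c2 \<le> 2" by simp
    qed
    have t1T: "t1 \<in> T" and t2T: "t2 \<in> T" using p1 p2 e1 e2 by auto
    have key: "v = 0" if "c1 = c1[i := c1 ! i + v]" "i < N" for i v
    proof -
      have "c1 ! i = c1[i := c1 ! i + v] ! i" using that(1) by simp
      then show ?thesis using that(2) l1 by simp
    qed
    have "t1 = t2"
    proof (cases t1)
      case None
      show ?thesis
      proof (cases t2)
        case None then show ?thesis using \<open>t1 = None\<close> by simp
      next
        case (Some a)
        then obtain j w where a: "t2 = Some (j, w)" "j < N" "w \<noteq> 0" using t2T unfolding T_def by auto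
        then have "c1 = c1[j := c1 ! j + w]" using eq e1 e2 c None unfolding f_def by simp
        then show ?thesis using key a by blast
      qed
    next
      case (Some a)
      then obtain i v where a: "t1 = Some (i, v)" "i < N" "v \<noteq> 0" using t1T unfolding T_def by auto
      show ?thesis
      proof (cases t2)
        case None
        then have "c1 = c1[i := c1 ! i + v]" using eq e1 e2 c a unfolding f_def by simp
        then show ?thesis using key a by blast
      next
        case (Some b)
        then obtain j w where b: "t2 = Some (j, w)" "j < N" "w \<noteq> 0" using t2T unfolding T_def by auto
        have E: "c1[i := c1 ! i + v] = c1[j := c1 ! j + w]" using eq e1 e2 c a b unfolding f_def by simp
        then have "c1[i := c1 ! i + v] ! i = c1[j := c1 ! j + w] ! i" by simp
        then have "c1 ! i + v = (if j = i then c1 ! i + w else c1 ! i)"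
          using a b l1 by (simp add: nth_list_update)
        then show ?thesis using a b by (auto split: if_splits)
      qed
    qed
    then show "p1 = p2" using e1 e2 c by simp
  qed
  have "f ` (D \<times> T) \<subseteq> {xs. length xs = N}" using props DL by auto
  then have "card (f ` (D \<times> T)) \<le> card (UNIV::'a set) ^ N"
    using card_mono[OF finite_lists_N, of "f ` (D \<times> T)" N] by (simp add: card_lists_N)
  moreover have "card (f ` (D \<times> T)) = card D * card T"
    using card_image[OF inj] by (simp add: card_cartesian_product)
  ultimately show ?thesis using cT by simp
qed

lemma weight_ge2:
  fixes emb :: "'a::field \<Rightarrow> 'b::field"
  assumes fe: "field_embedding emb" and a0: "a \<noteq> 0" and z: "length z = n" "Ev emb a n z = 0"
    and ne: "{i. i < n \<and> z ! i \<noteq> 0} \<noteq> {}"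
  shows "2 \<le> card {i. i < n \<and> z ! i \<noteq> 0}"
proof (rule ccontr)
  define S where "S = {i. i < n \<and> z ! i \<noteq> 0}"
  assume "\<not> 2 \<le> card {i. i < n \<and> z ! i \<noteq> 0}"
  moreover have "finite S" unfolding S_def by auto
  moreover have "card S > 0" using ne \<open>finite S\<close> unfolding S_def by (simp add: card_gt_0_iff)
  ultimately have "card S = 1" unfolding S_def by linarith
  then obtain i where Si: "S = {i}" by (rule card_1_singletonE)
  have "Ev emb a n z = (\<Sum>i\<in>S. emb (z ! i) * a ^ i)"
    unfolding Ev_def by (rule sum_supp[OF fe]) (auto simp: S_def)
  also have "\<dots> = emb (z ! i) * a ^ i" using Si by simp
  also have "\<dots> \<noteq> 0" using Si a0 fe_eq0[OF fe] unfolding S_def by auto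
  finally show False using z by simp
qed

lemma weight_ne2:
  fixes emb :: "'a::field \<Rightarrow> 'b::field"
  assumes fe: "field_embedding emb" and z: "length z = n" "Ev emb a n z = 0"
    and no2: "\<And>i j u v. i < j \<Longrightarrow> j < n \<Longrightarrow> u \<noteq> 0 \<Longrightarrow> v \<noteq> 0 \<Longrightarrow> emb u * a ^ i + emb v * a ^ j \<noteq> 0"
  shows "card {i. i < n \<and> z ! i \<noteq> 0} \<noteq> 2"
proof
  define S where "S = {i. i < n \<and> z ! i \<noteq> 0}"
  assume "card {i. i < n \<and> z ! i \<noteq> 0} = 2"
  then obtain i j where Sij: "S = {i, j}" "i \<noteq> j" unfolding S_def card_2_iff by blast
  have "Ev emb a n z = (\<Sum>i\<in>S. emb (z ! i) * a ^ i)"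
    unfolding Ev_def by (rule sum_supp[OF fe]) (auto simp: S_def)
  also have "\<dots> = emb (z ! i) * a ^ i + emb (z ! j) * a ^ j" using Sij by simp
  finally have e: "emb (z ! i) * a ^ i + emb (z ! j) * a ^ j = 0" using z by simp
  have m: "i < n" "j < n" "z ! i \<noteq> 0" "z ! j \<noteq> 0" using Sij unfolding S_def by auto
  show False
  proof (cases "i < j")
    case True then show False using no2[of i j "z ! i" "z ! j"] m e by simp
  next
    case False then have "j < i" using Sij by simp
    then show False using no2[of j i "z ! j" "z ! i"] m e by (simp add: add.commute)
  qed
qed

lemma pow3_ge: "2 * m + 1 \<le> (3::nat) ^ m"
  by (induction m) auto

lemma ord_pow:
  fixes q m :: nat
  assumes q3: "q \<ge> 3" and m1: "m \<ge> 1"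
  shows "ord (q ^ m - 1) q = m"
proof -
  define M where "M = q ^ m - 1"
  have qm: "q ^ m \<ge> q" using m1 q3 by (simp add: self_le_power)
  then have M1: "M > 1" unfolding M_def using q3 by linarith
  have cop: "coprime M q"
  proof -
    have "coprime (q ^ m - 1) (q ^ m)" using q3 by (intro coprime_diff_one_left_nat) simp
    then show ?thesis unfolding M_def using m1 by simp
  qed
  have qmM: "q ^ m = M + 1" unfolding M_def using qm q3 by simp
  have cg: "[q ^ m = 1] (mod M)" unfolding cong_def qmM using M1 by (simp add: mod_Suc)
  define k where "k = ord M q"
  have k0: "k > 0" unfolding k_def using cop by simp
  have kd: "k dvd m" unfolding k_def using cg ord_divides by blast
  then have km: "k \<le> m" using m1 by (simp add: dvd_imp_le)
  have "\<not> k < m"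
  proof
    assume "k < m"
    have ck: "[q ^ k = 1] (mod M)" unfolding k_def by (rule ord)
    have "q ^ k \<le> q ^ (m - 1)" using \<open>k < m\<close> q3 by (intro power_increasing) auto
    moreover have "q ^ (m - 1) + 2 \<le> q ^ m"
    proof -
      obtain m' where m': "m = Suc m'" using m1 by (cases m) auto
      have x1: "q ^ m' \<ge> 1" using q3 by simp
      have "3 * q ^ m' \<le> q * q ^ m'" using q3 by (rule mult_le_mono1)
      moreover have "q ^ m = q * q ^ m'" "q ^ (m - 1) = q ^ m'" using m' by simp_all
      ultimately show ?thesis using x1 by linarith
    qed
    ultimately have "q ^ k < M" unfolding M_def by linarith
    then have "q ^ k mod M = q ^ k" by simp
    then have "q ^ k = 1" using ck M1 unfolding cong_def by simp
    moreover have "q ^ k \<ge> q" using k0 q3 by (simp add: self_le_power)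
    ultimately show False using q3 by simp
  qed
  then show ?thesis using km unfolding k_def M_def by simp
qed

lemma three_field:
  assumes "card (UNIV :: 'a::{finite,field} set) = 3"
  shows three_ne: "(1::'a) \<noteq> -1" and three_univ: "(UNIV::'a set) = {0, 1, -1}"
    and three_2: "(1::'a) + 1 = -1"
proof -
  show ne: "(1::'a) \<noteq> -1"
  proof
    assume e: "(1::'a) = -1"
    have "\<not> UNIV \<subseteq> {0::'a, 1}"
    proof
      assume "UNIV \<subseteq> {0::'a, 1}"
      then have "card (UNIV::'a set) \<le> card {0::'a, 1}" by (intro card_mono) auto
      also have "\<dots> \<le> 2" by (simp add: card_insert_le_m1)
      finally show False using assms by simp
    qed
    then obtain c :: 'a where c: "c \<noteq> 0" "c \<noteq> 1" by auto
    have U: "(UNIV::'a set) = {0, 1, c}"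
    proof (rule sym, rule card_subset_eq)
      show "card {0, 1, c} = card (UNIV::'a set)" using c assms by simp
    qed auto
    have "c + 1 \<in> {0, 1, c}" using U by blast
    moreover have "c + 1 \<noteq> 0"
    proof
      assume "c + 1 = 0"
      then have "c = - 1" by (simp add: eq_neg_iff_add_eq_0)
      then show False using c e by simp
    qed
    moreover have "c + 1 \<noteq> 1" using c by simp
    moreover have "c + 1 \<noteq> c" by simp
    ultimately show False by blast
  qed
  have d: "(0::'a) \<noteq> -1" by simp
  show U: "(UNIV::'a set) = {0, 1, -1}"
  proof (rule sym, rule card_subset_eq)
    show "card {0::'a, 1, -1} = card (UNIV::'a set)" using ne d assms by simp
  qed auto
  have "(1::'a) + 1 \<in> {0, 1, -1}" using U by blast
  moreover have "(1::'a) + 1 \<noteq> 0" using ne eq_neg_iff_add_eq_0[of "1::'a" 1] by simp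
  moreover have "(1::'a) + 1 \<noteq> 1" using add_left_cancel[of "1::'a" 1 0] by simp
  ultimately show "(1::'a) + 1 = -1" by blast
qed

lemma kernel_card:
  fixes E :: "'a::{finite,field} list \<Rightarrow> 'b::{finite,field}"
  assumes add: "\<And>x y. length x = n \<Longrightarrow> length y = n \<Longrightarrow> E (map2 (+) x y) = E x + E y"
    and diff: "\<And>x y. length x = n \<Longrightarrow> length y = n \<Longrightarrow> E (map2 (-) x y) = E x - E y"
    and surj: "\<And>b. \<exists>c. length c = n \<and> E c = b"
  shows "card (UNIV::'b set) * card {c. length c = n \<and> E c = 0} = card (UNIV::'a set) ^ n"
proof -
  define C where "C = {c. length c = n \<and> E c = 0}"
  define F where "F = (\<lambda>b. {c. length c = n \<and> E c = b})"
  have L: "{xs :: 'a list. length xs = n} = (\<Union>b\<in>UNIV. F b)" unfolding F_def by auto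
  have finF: "finite (F b)" for b
      proof -
    have "F b \<subseteq> {xs::'a list. length xs = n}" unfolding F_def by auto
    then show ?thesis using finite_lists_N[where 'a='a, of n] by (rule finite_subset)
  qed
  have "card {xs :: 'a list. length xs = n} = (\<Sum>b\<in>UNIV. card (F b))"
    unfolding L by (rule card_UN_disjoint) (auto simp: finF[unfolded F_def] F_def)
  moreover have "card (F b) = card C" for b
  proof -
    obtain s where s: "length s = n" "E s = b" using surj by blast
    have inj: "inj_on (\<lambda>c. map2 (+) c s) C"
    proof (rule inj_onI)
      fix x y assume x: "x \<in> C" and y: "y \<in> C" and e: "map2 (+) x s = map2 (+) y s"
      show "x = y"
      proof (rule nth_equalityI)
        show "length x = length y" using x y unfolding C_def by simp
        fix i assume i: "i < length x"
        have "map2 (+) x s ! i = map2 (+) y s ! i" using e by simp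
        then show "x ! i = y ! i" using i x y s unfolding C_def by simp
      qed
    qed
    have img: "(\<lambda>c. map2 (+) c s) ` C = F b"
    proof (intro equalityI subsetI)
      fix z assume "z \<in> (\<lambda>c. map2 (+) c s) ` C"
      then obtain c where c: "c \<in> C" "z = map2 (+) c s" by blast
      then show "z \<in> F b" using add[of c s] s unfolding C_def F_def by simp
    next
      fix z assume z: "z \<in> F b"
      define c where "c = map2 (-) z s"
      have "c \<in> C" using diff[of z s] z s unfolding c_def C_def F_def by simp
      moreover have "z = map2 (+) c s"
        using z s unfolding c_def F_def by (intro nth_equalityI) auto
      ultimately show "z \<in> (\<lambda>c. map2 (+) c s) ` C" by blast
    qed
    show ?thesis using card_image[OF inj] img by simp
  qed
  ultimately show ?thesis using card_lists_N[where 'a='a, of n] unfolding C_def by simp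
qed

lemma word_props:
  fixes emb :: "'a::field \<Rightarrow> 'b::field"
  assumes fe: "field_embedding emb" and S: "S \<subseteq> {..<n}"
    and supp: "\<And>i. i < n \<Longrightarrow> (f i \<noteq> 0 \<longleftrightarrow> i \<in> S)"
  shows "Ev emb a n (map f [0..<n]) = (\<Sum>i\<in>S. emb (f i) * a ^ i)"
    and "hamming_dist (map f [0..<n]) (replicate n 0) = card S"
proof -
  show "Ev emb a n (map f [0..<n]) = (\<Sum>i\<in>S. emb (f i) * a ^ i)"
    unfolding Ev_map by (rule sum_supp[OF fe S]) (use supp in auto)
  have "{i. i < length (map f [0..<n]) \<and> map f [0..<n] ! i \<noteq> replicate n 0 ! i} = S"
  proof -
    have Sn: "\<And>i. i \<in> S \<Longrightarrow> i < n" using S by auto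
    show ?thesis using supp Sn by fastforce
  qed
  then show "hamming_dist (map f [0..<n]) (replicate n 0) = card S"
    unfolding hamming_dist_def by simp
qed

lemma orbit_pigeon:
  fixes emb :: "'a::{finite,field} \<Rightarrow> 'b::{finite,field}"
  assumes fe: "field_embedding emb" and cb: "card (UNIV - {0::'b}) = N"
    and a0: "a \<noteq> 0" and lt: "N < (card (UNIV::'a set) - 1) * n"
  shows "\<exists>i j c. i < n \<and> j < n \<and> i \<noteq> j \<and> c \<noteq> 0 \<and> a ^ j = emb c * a ^ i"
proof -
  define K where "K = card (UNIV::'a set) - 1"
  define U where "U = UNIV - {0::'b}"
  define Orb where "Orb = (\<lambda>b. (\<lambda>c. emb c * b) ` (UNIV - {0::'a}))"
  define P where "P = Orb ` U"
  have cO: "card (Orb b) = K" if "b \<in> U" for b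
  proof -
    have "inj_on (\<lambda>c. emb c * b) (UNIV - {0::'a})"
    proof (rule inj_onI)
      have b0: "b \<noteq> 0" using that unfolding U_def by simp
      fix c c' assume "c \<in> UNIV - {0::'a}" "c' \<in> UNIV - {0::'a}" "emb c * b = emb c' * b"
      then have "emb c = emb c'" using b0 by simp
      then show "c = c'" using fe_inj[OF fe] by simp
    qed
    then have "card (Orb b) = card (UNIV - {0::'a})" unfolding Orb_def by (rule card_image)
    also have "\<dots> = K" unfolding K_def by (rule card_Diff_singleton) simp
    finally show ?thesis .
  qed
  have OU: "Orb b \<subseteq> U" if "b \<in> U" for b
  proof
    fix y assume "y \<in> Orb b"
    then have "y \<in> (\<lambda>c. emb c * b) ` (UNIV - {0})" unfolding Orb_def .
    then obtain c where c': "y = emb c * b" "c \<in> UNIV - {0}" by (rule imageE)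
    then have c: "c \<noteq> 0" "y = emb c * b" by auto
    have "emb c \<noteq> 0" using c(1) fe_eq0[OF fe, of c] by simp
    moreover have "b \<noteq> 0" using that unfolding U_def by simp
    ultimately show "y \<in> U" using c(2) unfolding U_def by simp
  qed
  have bO: "b \<in> Orb b" for b
  proof -
    have "emb 1 * b \<in> Orb b" unfolding Orb_def by (rule image_eqI[where x="1::'a"]) simp_all
    then show ?thesis using fe_1[OF fe] by simp
  qed
  have sub: "Orb b1 \<subseteq> Orb b2" if "x \<in> Orb b1" "x \<in> Orb b2" "b1 \<in> U" for x b1 b2
  proof -
    have "x \<in> (\<lambda>c. emb c * b1) ` (UNIV - {0})" using that(1) unfolding Orb_def .
    then obtain c1 where c1': "x = emb c1 * b1" "c1 \<in> UNIV - {0}" by (rule imageE)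
    then have c1: "c1 \<noteq> 0" "x = emb c1 * b1" by auto
    have "x \<in> (\<lambda>c. emb c * b2) ` (UNIV - {0})" using that(2) unfolding Orb_def .
    then obtain c2 where c2': "x = emb c2 * b2" "c2 \<in> UNIV - {0}" by (rule imageE)
    then have c2: "c2 \<noteq> 0" "x = emb c2 * b2" by auto
    have e1: "emb c1 \<noteq> 0" using c1(1) fe_eq0[OF fe, of c1] by simp
    have eq: "emb c1 * b1 = emb c2 * b2" using c1(2) c2(2) by simp
    have "b1 = (emb c1 * b1) / emb c1" using e1 by simp
    also have "\<dots> = (emb c2 * b2) / emb c1" using eq by simp
    also have "\<dots> = emb (c2 / c1) * b2" using fe_divide[OF fe c1(1), of c2] by simp
    finally have b1: "b1 = emb (c2 / c1) * b2" .
    show ?thesis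
    proof
    fix y assume "y \<in> Orb b1"
    then have "y \<in> (\<lambda>c. emb c * b1) ` (UNIV - {0})" unfolding Orb_def .
    then obtain c where c': "y = emb c * b1" "c \<in> UNIV - {0}" by (rule imageE)
    then have c: "c \<noteq> 0" "y = emb c * b1" by auto
    have "y = emb (c * (c2 / c1)) * b2" using c(2) b1 fe_mult[OF fe, of c "c2/c1"] by (simp add: mult.assoc)
    moreover have "c * (c2 / c1) \<noteq> 0" using c c1 c2 by simp
    ultimately show "y \<in> Orb b2" unfolding Orb_def by (intro image_eqI[where x="c * (c2 / c1)"]) simp_all
  qed
  qed
  have "K * card P = card (\<Union>P)"
  proof (rule card_partition)
    show "finite P" by simp
    show "finite (\<Union>P)" by simp
    show "card c = K" if "c \<in> P" for c using cO that unfolding P_def by auto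
    show "c1 \<inter> c2 = {}" if "c1 \<in> P" "c2 \<in> P" "c1 \<noteq> c2" for c1 c2
    proof -
      from that obtain b1 b2 where "c1 = Orb b1" "c2 = Orb b2" "b1 \<in> U" "b2 \<in> U" unfolding P_def by auto
      note bb = this
      show "c1 \<inter> c2 = {}"
      proof (rule ccontr)
        assume "c1 \<inter> c2 \<noteq> {}"
        then obtain x where x: "x \<in> Orb b1" "x \<in> Orb b2" using bb by blast
        have "Orb b1 \<subseteq> Orb b2" by (rule sub[OF x bb(3)])
        moreover have "Orb b2 \<subseteq> Orb b1" by (rule sub[OF x(2) x(1) bb(4)])
        ultimately show False using bb \<open>c1 \<noteq> c2\<close> by simp
      qed
    qed
  qed
  moreover have "\<Union>P = U"
  proof
    show "\<Union>P \<subseteq> U" unfolding P_def using OU by auto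
    show "U \<subseteq> \<Union>P" unfolding P_def using bO by auto
  qed
  ultimately have KP: "K * card P = N" using cb unfolding U_def by simp
  have "\<not> inj_on (\<lambda>i. Orb (a ^ i)) {..<n}"
  proof
    assume "inj_on (\<lambda>i. Orb (a ^ i)) {..<n}"
    then have "card ((\<lambda>i. Orb (a ^ i)) ` {..<n}) = n" by (simp add: card_image)
    moreover have "(\<lambda>i. Orb (a ^ i)) ` {..<n} \<subseteq> P" unfolding P_def U_def using a0 by auto
    then have "card ((\<lambda>i. Orb (a ^ i)) ` {..<n}) \<le> card P" by (intro card_mono) auto
    ultimately have "n \<le> card P" by simp
    then have "K * n \<le> N" using KP mult_le_mono2[of n "card P" K] by simp
    then show False using lt unfolding K_def by simp
  qed
  then obtain i j where ij: "i \<in> {..<n}" "j \<in> {..<n}" "i \<noteq> j" "Orb (a ^ i) = Orb (a ^ j)"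
    unfolding inj_on_def by blast
  then have "a ^ j \<in> Orb (a ^ i)" using bO by simp
  then have "a ^ j \<in> (\<lambda>c. emb c * a ^ i) ` (UNIV - {0})" unfolding Orb_def .
  then obtain c where c': "a ^ j = emb c * a ^ i" "c \<in> UNIV - {0}" by (rule imageE)
  then have "c \<noteq> 0" "a ^ j = emb c * a ^ i" by auto
  then show ?thesis using ij(1-3) by auto
qed

theorem theorem37:
  fixes emb :: "'a::{finite,field} \<Rightarrow> 'b::{finite,field}"
    and q m n l :: nat and \<alpha> :: 'b
  assumes "card (UNIV :: 'a set) = q"
    and "odd q" and "\<exists>p r. prime p \<and> r > 0 \<and> q = p ^ r"
    and "m \<ge> 2" and "n = (q ^ m - 1) div 2"
    and "l = ord (2 * n) q" and "card (UNIV :: 'b set) = q ^ l"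
    and "field_embedding emb"
    and "primitive_element \<alpha>"
  shows "has_params (negacyclic_code n (min_poly emb (\<alpha> ^ ((q ^ l - 1) div (2 * n)))))
            n (n - m) (if q = 3 then 3 else 2)
       \<and> distance_optimal TYPE('a) n (n - m) (if q = 3 then 3 else 2)"
proof -
  note fe = assms(8)
  have cq: "card (UNIV :: 'a set) = q" by (rule assms(1))
  from assms(3) obtain p r where pr: "prime p" "r > 0" "q = p ^ r" by blast
  have q3: "q \<ge> 3"
  proof -
    have p2: "p \<ge> 2" using pr(1) by (rule prime_ge_2_nat)
    have "p \<noteq> 2"
    proof
      assume "p = 2"
      then have "even q" using pr(2,3) by simp
      then show False using assms(2) by simp
    qed
    then have "p \<ge> 3" using p2 by simp
    moreover have "p \<le> q" using pr(2,3) p2 by (simp add: self_le_power)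
    ultimately show ?thesis by simp
  qed
  have m2: "m \<ge> 2" by (rule assms(4))
  have qm9: "q ^ m \<ge> 9"
  proof -
    have "(3::nat) ^ 2 \<le> 3 ^ m" using m2 by (intro power_increasing) auto
    also have "\<dots> \<le> q ^ m" using q3 by (intro power_mono) auto
    finally show ?thesis by simp
  qed
  have oddqm: "odd (q ^ m)" using assms(2) by simp
  define N where "N = 2 * n"
  have ev: "even (q ^ m - 1)" using oddqm qm9 by simp
  have NN: "N = q ^ m - 1" unfolding N_def assms(5) using ev by simp
  have lm: "l = m" using assms(6) ord_pow[OF q3, of m] m2 NN N_def by simp
  have cardb: "card (UNIV :: 'b set) = N + 1" using assms(7) lm NN qm9 by simp
  have Npos: "N \<ge> 8" using NN qm9 by simp
  have npos: "n \<ge> 4" using Npos N_def by simp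
  have beta: "(q ^ l - 1) div (2 * n) = 1" using lm NN N_def Npos by simp
  have mn: "m \<le> n"
  proof -
    have "2 * m + 1 \<le> 3 ^ m" by (rule pow3_ge)
    also have "\<dots> \<le> q ^ m" using q3 by (intro power_mono) auto
    finally show ?thesis using NN N_def by simp
  qed
  note prim = assms(9)
  have a0: "\<alpha> \<noteq> 0" by (rule prim_nz[OF prim cardb])
  have aN: "\<alpha> ^ N = 1" by (rule prim_N[OF prim cardb])
  have amin: "\<And>k. 0 < k \<Longrightarrow> k < N \<Longrightarrow> \<alpha> ^ k \<noteq> 1" by (rule prim_min[OF prim cardb])
  have ainj: "\<And>i j. i < N \<Longrightarrow> j < N \<Longrightarrow> \<alpha> ^ i = \<alpha> ^ j \<Longrightarrow> i = j"
    by (rule prim_inj[OF prim cardb])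
  have asurj: "\<And>b. b \<noteq> 0 \<Longrightarrow> \<exists>k<N. b = \<alpha> ^ k" by (rule prim_surj[OF prim cardb])
  have an: "\<alpha> ^ n = -1"
  proof -
    have "(\<alpha> ^ n)\<^sup>2 = \<alpha> ^ N" unfolding N_def by (simp add: power_mult[symmetric] mult.commute)
    then have "(\<alpha> ^ n)\<^sup>2 = 1" using aN by simp
    then have "\<alpha> ^ n = 1 \<or> \<alpha> ^ n = -1" by (simp add: power2_eq_1_iff)
    moreover have "\<alpha> ^ n \<noteq> 1" using amin[of n] npos N_def by simp
    ultimately show ?thesis by simp
  qed
  have e0: "emb 0 = 0" by (rule fe_0[OF fe])
  have e1: "emb 1 = 1" by (rule fe_1[OF fe])
  have em1: "emb (-1) = -1" using fe_uminus[OF fe, of 1] e1 by simp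
  have root: "poly (map_poly emb (monom 1 n + 1)) \<alpha> = 0"
  proof -
    have "map_poly emb (monom 1 n + 1) = monom 1 n + 1"
      using map_poly_add_fe[OF fe, of "monom 1 n" 1] map_poly_monom[of emb 1 n] e0 e1 by simp
    then show ?thesis using an by (simp add: poly_monom)
  qed
  define C where "C = {c. length c = n \<and> Ev emb \<alpha> n c = 0}"
  have Cchar: "negacyclic_code n (min_poly emb \<alpha>) = C"
    unfolding C_def using npos by (intro negacyclic_char[OF fe _ root]) simp
  have goal_eq: "negacyclic_code n (min_poly emb (\<alpha> ^ ((q ^ l - 1) div (2 * n)))) = C"
    using Cchar beta by simp
  have unitE: "Ev emb \<alpha> n (map (\<lambda>i. if i = k then a else 0) [0..<n]) = emb a * \<alpha> ^ k"
    if "k < n" for k a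
  proof -
    have "Ev emb \<alpha> n (map (\<lambda>i. if i = k then a else 0) [0..<n])
        = (\<Sum>i\<in>{k}. emb (if i = k then a else 0) * \<alpha> ^ i)"
      unfolding Ev_map by (rule sum_supp[OF fe]) (use that in auto)
    then show ?thesis by simp
  qed
  have surj: "\<exists>c. length c = n \<and> Ev emb \<alpha> n c = b" for b
  proof (cases "b = 0")
    case True
    then show ?thesis using unitE[of 0 0] npos e0
      by (intro exI[of _ "map (\<lambda>i. if i = 0 then 0 else 0) [0..<n]"]) simp
  next
    case False
    then obtain k where k: "k < N" "b = \<alpha> ^ k" using asurj by blast
    show ?thesis
    proof (cases "k < n")
      case True
      then show ?thesis using unitE[of k 1] e1 k
        by (intro exI[of _ "map (\<lambda>i. if i = k then 1 else 0) [0..<n]"]) simp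
    next
      case False
      define j where "j = k - n"
      have j: "j < n" using k False N_def j_def by simp
      have "\<alpha> ^ k = \<alpha> ^ n * \<alpha> ^ j" using False j_def by (simp flip: power_add)
      then have "b = - (\<alpha> ^ j)" using an k by simp
      then show ?thesis using unitE[OF j, of "-1"] em1
        by (intro exI[of _ "map (\<lambda>i. if i = j then -1 else 0) [0..<n]"]) simp
    qed
  qed
  have kc: "card (UNIV::'b set) * card C = q ^ n"
    unfolding C_def cq[symmetric]
    by (rule kernel_card[OF Ev_add[OF fe] Ev_diff[OF fe] surj])
  have cardC: "card C = q ^ (n - m)"
  proof -
    have cb': "card (UNIV :: 'b set) = q ^ m" using assms(7) lm by simp
    have "q ^ n = q ^ m * q ^ (n - m)" using mn by (simp flip: power_add)
    then have "q ^ m * card C = q ^ m * q ^ (n - m)" using kc cb' by simp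
    then show ?thesis using q3 by simp
  qed
  have lin: "linear_code n C"
    unfolding linear_code_def
  proof (intro conjI ballI allI)
    show "C \<subseteq> {xs. length xs = n}" unfolding C_def by auto
    show "replicate n 0 \<in> C" unfolding C_def Ev_def by (simp add: e0)
    fix x assume x: "x \<in> C"
    {
      fix y assume y: "y \<in> C"
      show "map2 (+) x y \<in> C" using x y Ev_add[OF fe, of x n y] unfolding C_def by simp
    }
    fix c
    show "map ((*) c) x \<in> C" using x Ev_smult[OF fe, of x n] unfolding C_def by simp
  qed
  define d where "d = (if q = 3 then 3 else (2::nat))"
  define D where "D = {hamming_dist x y | x y. x \<in> C \<and> y \<in> C \<and> x \<noteq> y}"
  have finD: "finite D"
  proof (rule finite_subset)
    show "D \<subseteq> {..n}"
    proof
      fix e assume "e \<in> D"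
      then obtain x y where "e = hamming_dist x y" "x \<in> C" unfolding D_def by blast
      then show "e \<in> {..n}" using ham_le[of x y] unfolding C_def by simp
    qed
  qed simp
  have q3facts: "(1::'a) + 1 = -1" "(UNIV::'a set) = {0, 1, -1}" "(1::'a) \<noteq> -1" if "q = 3"
  proof -
    have c3: "card (UNIV::'a set) = 3" using cq that by simp
    show "(1::'a) + 1 = -1" by (rule three_2[OF c3])
    show "(UNIV::'a set) = {0, 1, -1}" by (rule three_univ[OF c3])
    show "(1::'a) \<noteq> -1" by (rule three_ne[OF c3])
  qed
  have no2: "emb u * \<alpha> ^ i + emb v * \<alpha> ^ j \<noteq> 0"
    if q: "q = 3" and ij: "i < j" "j < n" "u \<noteq> 0" "v \<noteq> 0" for i j u v
  proof
    assume eq: "emb u * \<alpha> ^ i + emb v * \<alpha> ^ j = 0"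
    define k where "k = j - i"
    have k: "0 < k" "k < n" using ij k_def by auto
    have "\<alpha> ^ j = \<alpha> ^ i * \<alpha> ^ k" using ij k_def by (simp flip: power_add)
    then have "\<alpha> ^ i * (emb u + emb v * \<alpha> ^ k) = 0" using eq by (simp add: algebra_simps)
    then have s: "emb u + emb v * \<alpha> ^ k = 0" using a0 by simp
    have ev: "emb v \<noteq> 0" using ij(4) fe_eq0[OF fe, of v] by simp
    have vk: "emb v * \<alpha> ^ k = - emb u" using s by (simp add: eq_neg_iff_add_eq_0 add.commute)
    have "\<alpha> ^ k = (emb v * \<alpha> ^ k) / emb v" using ev by simp
    also have "\<dots> = - emb u / emb v" using vk by simp
    also have "\<dots> = emb (- u / v)" using fe_divide[OF fe ij(4), of "-u"] fe_uminus[OF fe, of u] by simp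
    finally have ak: "\<alpha> ^ k = emb (- u / v)" .
    have "- u / v \<noteq> 0" using ij by simp
    then have "- u / v = 1 \<or> - u / v = -1" using q3facts(2)[OF q] by blast
    then show False
    proof
      assume "- u / v = 1"
      then have "\<alpha> ^ k = 1" using ak e1 by simp
      then show False using amin[of k] k N_def by simp
    next
      assume "- u / v = -1"
      then have "\<alpha> ^ k = \<alpha> ^ n" using ak em1 an by simp
      then have "k = n" using ainj[of k n] k N_def npos by simp
      then show False using k by simp
    qed
  qed
  have lower: "d \<le> e" if eD: "e \<in> D" for e
  proof -
    obtain x y where xy: "e = hamming_dist x y" "x \<in> C" "y \<in> C" "x \<noteq> y"
      using eD unfolding D_def by blast
    have lx: "length x = n" and ly: "length y = n" using xy unfolding C_def by auto
    define z where "z = map2 (-) x y"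
    have lz: "length z = n" using lx ly z_def by simp
    have Ez: "Ev emb \<alpha> n z = 0" using Ev_diff[OF fe lx ly] xy unfolding z_def C_def by simp
    have Sz: "{i. i < n \<and> z ! i \<noteq> 0} = {i. i < length x \<and> x ! i \<noteq> y ! i}"
      using lx ly unfolding z_def by auto
    have hz: "e = card {i. i < n \<and> z ! i \<noteq> 0}" using xy Sz unfolding hamming_dist_def by simp
    have ne: "{i. i < n \<and> z ! i \<noteq> 0} \<noteq> {}"
    proof
      assume "{i. i < n \<and> z ! i \<noteq> 0} = {}"
      then have "\<forall>i<length x. x ! i = y ! i" using Sz by auto
      then have "x = y" using lx ly by (intro nth_equalityI) auto
      then show False using xy by simp
    qed
    have w2: "2 \<le> e" using weight_ge2[OF fe a0 lz Ez ne] hz by simp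
    show ?thesis
    proof (cases "q = 3")
      case True
      have "e \<noteq> 2" using weight_ne2[OF fe lz Ez no2[OF True]] hz by simp
      then show ?thesis using w2 True d_def by simp
    next
      case False then show ?thesis using w2 d_def by simp
    qed
  qed
  have upper: "d \<in> D"
  proof (cases "q = 3")
    case True
    note tf = q3facts[OF True]
    have "(1::'b) + 1 = emb 1 + emb 1" using e1 by simp
    also have "\<dots> = emb (1 + 1)" by (rule fe_add[OF fe, symmetric])
    also have "\<dots> = emb (-1)" using tf(1) by (rule arg_cong)
    also have "\<dots> = -1" by (rule em1)
    finally have b2: "(1::'b) + 1 = -1" .
    have "1 + \<alpha> \<noteq> 0"
    proof
      assume "1 + \<alpha> = 0"
      then have "\<alpha> ^ 1 = \<alpha> ^ n" using an by (simp add: add_eq_0_iff)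
      then have "1 = n" using ainj[of 1 n] npos N_def by simp
      then show False using npos by simp
    qed
    then obtain k where k: "k < N" "1 + \<alpha> = \<alpha> ^ k" using asurj by blast
    have a1: "\<alpha> \<noteq> 1" using amin[of 1] Npos by simp
    have "\<exists>j s. j < n \<and> j \<noteq> 0 \<and> j \<noteq> 1 \<and> s \<noteq> 0 \<and> 1 + \<alpha> + emb s * \<alpha> ^ j = 0"
    proof (cases "k < n")
      case True
      have "k \<noteq> 0"
      proof
        assume "k = 0"
        then have "1 + \<alpha> = 1" using k by simp
        then show False using a0 by simp
      qed
      moreover have "k \<noteq> 1" using k by auto
      moreover have "1 + \<alpha> + emb (-1) * \<alpha> ^ k = 0" using k em1 by simp
      ultimately show ?thesis using True by (intro exI[of _ k] exI[of _ "-1::'a"]) simp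
    next
      case False
      define j where "j = k - n"
      have j: "j < n" using k False N_def j_def by simp
      have "\<alpha> ^ k = \<alpha> ^ n * \<alpha> ^ j" using False j_def by (simp flip: power_add)
      then have kj: "1 + \<alpha> = - (\<alpha> ^ j)" using an k by simp
      have "j \<noteq> 0"
      proof
        assume "j = 0"
        then have "1 + \<alpha> = -1" using kj by simp
        note h = this
        have "\<alpha> = (1 + \<alpha>) - 1" by simp
        also have "\<dots> = -1 - 1" by (simp only: h)
        also have "\<dots> = - (1 + 1)" by simp
        also have "\<dots> = 1" using b2 by simp
        finally show False using a1 by simp
      qed
      moreover have "j \<noteq> 1"
      proof
        assume "j = 1"
        then have "1 + \<alpha> + \<alpha> = 0" using kj by simp
        then have h2: "1 + (\<alpha> + \<alpha>) = 0" by (simp add: add.assoc)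
        have "\<alpha> + \<alpha> = (1 + 1) * \<alpha>" by (simp add: algebra_simps)
        also have "\<dots> = -1 * \<alpha>" by (simp only: b2)
        finally have "\<alpha> + \<alpha> = - \<alpha>" by simp
        then have "1 + - \<alpha> = 0" using h2 by (simp only:)
        then have "1 - \<alpha> = 0" by simp
        then show False using a1 by simp
      qed
      moreover have "1 + \<alpha> + emb 1 * \<alpha> ^ j = 0" using kj e1 by simp
      ultimately show ?thesis using j by (intro exI[of _ j] exI[of _ "1::'a"]) simp
    qed
    then obtain j s where js: "j < n" "j \<noteq> 0" "j \<noteq> 1" "s \<noteq> 0" "1 + \<alpha> + emb s * \<alpha> ^ j = 0"
      by blast
    define f where "f = (\<lambda>i. if i = 0 then 1 else if i = 1 then 1 else if i = j then s else (0::'a))"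
    have S: "{0, 1, j} \<subseteq> {..<n}" using js npos by auto
    have supp: "f i \<noteq> 0 \<longleftrightarrow> i \<in> {0, 1, j}" if "i < n" for i
      using js unfolding f_def by auto
    note wp = word_props(1)[OF fe S supp, of \<alpha>] word_props(2)[OF fe S supp]
    have "Ev emb \<alpha> n (map f [0..<n]) = emb (f 0) * \<alpha> ^ 0 + emb (f 1) * \<alpha> ^ 1 + emb (f j) * \<alpha> ^ j"
      using wp(1) js by (simp add: add.assoc)
    also have "\<dots> = 1 + \<alpha> + emb s * \<alpha> ^ j" using js e1 unfolding f_def by simp
    finally have "map f [0..<n] \<in> C" using js unfolding C_def by simp
    moreover have "replicate n 0 \<in> C" unfolding C_def Ev_def by (simp add: e0)
    moreover have "map f [0..<n] \<noteq> replicate n 0"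
    proof
      assume "map f [0..<n] = replicate n 0"
      then have "map f [0..<n] ! 0 = replicate n 0 ! 0" by simp
      then show False using npos unfolding f_def by simp
    qed
    ultimately have "hamming_dist (map f [0..<n]) (replicate n 0) \<in> D" unfolding D_def by blast
    moreover have "hamming_dist (map f [0..<n]) (replicate n 0) = 3" using wp(2) js by simp
    ultimately have "3 \<in> D" by simp
    then show ?thesis unfolding d_def using True by simp
  next
    case False
    have "q \<noteq> 4" using assms(2) by auto
    then have q5: "q \<ge> 5" using q3 False by simp
    have cb: "card (UNIV - {0::'b}) = N" using cardb by (simp add: card_Diff_singleton)
    have lt: "N < (card (UNIV::'a set) - 1) * n"
    proof -
      have "4 * n \<le> (q - 1) * n" using q5 by (intro mult_le_mono1) simp
      then show ?thesis using cq N_def npos by simp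
    qed
    obtain i j c where ijc: "i < n" "j < n" "i \<noteq> j" "c \<noteq> 0" "\<alpha> ^ j = emb c * \<alpha> ^ i"
      using orbit_pigeon[OF fe cb a0 lt] by blast
    define f where "f = (\<lambda>t. if t = i then c else if t = j then -1 else (0::'a))"
    have S: "{i, j} \<subseteq> {..<n}" using ijc by auto
    have supp: "f t \<noteq> 0 \<longleftrightarrow> t \<in> {i, j}" if "t < n" for t
      using ijc unfolding f_def by auto
    note wp = word_props(1)[OF fe S supp, of \<alpha>] word_props(2)[OF fe S supp]
    have "Ev emb \<alpha> n (map f [0..<n]) = emb (f i) * \<alpha> ^ i + emb (f j) * \<alpha> ^ j"
      using wp(1) ijc by simp
    also have "\<dots> = emb c * \<alpha> ^ i - (\<alpha> ^ j)" using ijc em1 unfolding f_def by simp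
    also have "\<dots> = 0" using ijc by simp
    finally have "map f [0..<n] \<in> C" unfolding C_def by simp
    moreover have "replicate n 0 \<in> C" unfolding C_def Ev_def by (simp add: e0)
    moreover have "map f [0..<n] \<noteq> replicate n 0"
    proof
      assume "map f [0..<n] = replicate n 0"
      then have "map f [0..<n] ! i = replicate n 0 ! i" by simp
      then show False using ijc unfolding f_def by simp
    qed
    ultimately have "hamming_dist (map f [0..<n]) (replicate n 0) \<in> D" unfolding D_def by blast
    moreover have "hamming_dist (map f [0..<n]) (replicate n 0) = 2" using wp(2) ijc by simp
    ultimately have "2 \<in> D" by simp
    then show ?thesis unfolding d_def using False by simp
  qed
  have md: "min_dist C = d"
    unfolding min_dist_def D_def[symmetric] using finD lower upper by (intro Min_eqI) auto
  have hp: "has_params C n (n - m) d"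
    unfolding has_params_def using lin cardC cq md by simp
  have opt: "distance_optimal TYPE('a) n (n - m) d"
    unfolding distance_optimal_def
  proof
    assume "\<exists>C' :: 'a list set. has_params C' n (n - m) (d + 1)"
    then obtain C' :: "'a list set" where hc: "has_params C' n (n - m) (d + 1)" by blast
    have C'L: "C' \<subseteq> {xs. length xs = n}" using hc unfolding has_params_def linear_code_def by blast
    have cC': "card C' = q ^ (n - m)" using hc cq unfolding has_params_def by simp
    define D' where "D' = {hamming_dist x y | x y. x \<in> C' \<and> y \<in> C' \<and> x \<noteq> y}"
    have finD': "finite D'"
    proof (rule finite_subset)
      show "D' \<subseteq> {..n}"
      proof
        fix e assume "e \<in> D'"
        then obtain x y where "e = hamming_dist x y" "x \<in> C'" unfolding D'_def by blast
        then show "e \<in> {..n}" using ham_le[of x y] C'L by auto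
      qed
    qed simp
    have md': "Min D' = d + 1" using hc unfolding has_params_def min_dist_def D'_def by simp
    have far: "d + 1 \<le> hamming_dist x y" if "x \<in> C'" "y \<in> C'" "x \<noteq> y" for x y
    proof -
      have "hamming_dist x y \<in> D'" unfolding D'_def using that by blast
      then show ?thesis using Min_le[OF finD'] md' by simp
    qed
    show False
    proof (cases "q = 3")
      case False
      have "q \<noteq> 4" using assms(2) by auto
      then have q5: "q \<ge> 5" using q3 False by simp
      have "\<forall>x\<in>C'. \<forall>y\<in>C'. x \<noteq> y \<longrightarrow> 3 \<le> hamming_dist x y"
        using far False unfolding d_def by auto
      then have sp: "card C' * (1 + n * (q - 1)) \<le> q ^ n"
        using sphere[OF C'L] cq by simp
      have "q ^ n = q ^ (n - m) * q ^ m" using mn by (simp flip: power_add)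
      then have "q ^ (n - m) * (1 + n * (q - 1)) \<le> q ^ (n - m) * q ^ m" using sp cC' by simp
      moreover have "q ^ (n - m) > 0" using q3 by simp
      ultimately have "1 + n * (q - 1) \<le> q ^ m" by (simp only: mult_le_cancel1)
      then have "n * (q - 1) \<le> 2 * n" using NN N_def qm9 by simp
      then have x1: "(q - 1) * n \<le> 2 * n" by (simp only: mult.commute)
      have x2: "4 * n \<le> (q - 1) * n" using q5 by (intro mult_le_mono1) simp
      show False using x1 x2 npos by linarith
    next
      case True
      define n' where "n' = n - 1"
      have nn: "n = n' + 1" using npos n'_def by simp
      define T where "T = (\<lambda>x::'a list. take n' x)"
      have tk: "3 \<le> hamming_dist (T x) (T y)" if "x \<in> C'" "y \<in> C'" "x \<noteq> y" for x y
      proof -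
        have "4 \<le> hamming_dist x y" using far[OF that] True d_def by simp
        moreover have "hamming_dist x y \<le> hamming_dist (T x) (T y) + 1"
          unfolding T_def using C'L that nn by (intro ham_take) auto
        ultimately show ?thesis by simp
      qed
      have injT: "inj_on T C'"
      proof (rule inj_onI)
        fix x y assume "x \<in> C'" "y \<in> C'" "T x = T y"
        then show "x = y" using tk[of x y] ham_self[of "T x"] by (cases "x = y") auto
      qed
      have TL: "T ` C' \<subseteq> {xs. length xs = n'}" unfolding T_def using C'L nn by auto
      have "\<forall>u\<in>T ` C'. \<forall>v\<in>T ` C'. u \<noteq> v \<longrightarrow> 3 \<le> hamming_dist u v"
      proof (intro ballI impI)
        fix u v assume "u \<in> T ` C'" "v \<in> T ` C'" "u \<noteq> v"
        then obtain x y where "x \<in> C'" "y \<in> C'" "u = T x" "v = T y" by blast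
        then show "3 \<le> hamming_dist u v" using tk[of x y] \<open>u \<noteq> v\<close> by (cases "x = y") auto
      qed
      then have sp: "card (T ` C') * (1 + n' * (q - 1)) \<le> q ^ n'"
        using sphere[OF TL] cq by simp
      then have sp2: "3 ^ (n - m) * (1 + n' * 2) \<le> 3 ^ n'" using card_image[OF injT] cC' True by simp
      have mm: "m = (m - 1) + 1" using m2 by simp
      have "(3::nat) ^ n' = 3 ^ (n - m) * 3 ^ (m - 1)" using mn nn m2 by (simp flip: power_add)
      then have "3 ^ (n - m) * (1 + n' * 2) \<le> 3 ^ (n - m) * 3 ^ (m - 1)" using sp2 by simp
      moreover have "(3::nat) ^ (n - m) > 0" by simp
      ultimately have i1: "1 + n' * 2 \<le> 3 ^ (m - 1)" by (simp only: mult_le_cancel1)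
      have "(3::nat) ^ m = 3 ^ Suc (m - 1)" using m2 by simp
      then have "(3::nat) ^ m = 3 * 3 ^ (m - 1)" by simp
      then have "2 * n + 1 = 3 * 3 ^ (m - 1)" using NN N_def qm9 True by simp
      then have "2 * 3 ^ (m - 1) \<le> (2::nat)" using i1 nn by simp
      then have "(3::nat) ^ (m - 1) \<le> 1" by simp
      moreover have "(3::nat) ^ 1 \<le> 3 ^ (m - 1)" using m2 by (intro power_increasing) auto
      ultimately show False by simp
    qed
  qed
  show ?thesis using hp opt goal_eq d_def by simp
qed

end
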